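(* Let $g$ be an $n$-person WTT game form, $i\in[n]$, and let $\ell,j,k$ be three distinct elements of $X_i$ such that $H_\ell\stackrel{c}{\Longrightarrow}H_j$ and $H_\ell\stackrel{d}{\Longrightarrow}H_k$ for some outcomes $c,d\in A$. Then $c=d$.
   Context: Let $X_1,\dots,X_n$ and $A$ be finite nonempty sets. An $n$-person game form is a map $g: X_1\times\cdots\times X_n\to A$; elements of $X=X_1\times\cdots\times X_n$ are strategy profiles, elements of $A$ are outcomes. For a direction $i\in[n]$ write $X_{-i}=\prod_{t\neq i}X_t$, and for $s\in X_i$, $y\in X_{-i}$ write $(s,y)$ for the profile with $i$-th coordinate $s$ and other coordinates $y$. The hyperplane perpendicular to direction $i$ at $s\in X_i$ is $H_s=\{x\in X: x_i=s\}$. $g$ is weakly totally tight (WTT) if for every $i\in[n]$, all $s\neq s'$ in $X_i$ and all $y\neq y'$ in $X_{-i}$, at least one of $g(s,y)=g(s,y')$, $g(s,y)=g(s',y)$, $g(s',y')=g(s',y)$, $g(s',y')=g(s,y')$ holds. For a direction $i$ and distinct $j,k\in X_i$, set $H_j^{\neq}(k)=\{(j,y): y\in X_{-i},\ g(j,y)\neq g(k,y)\}$. We write $H_j\stackrel{c}{\longrightarrow}H_k$ if $g(x)=c$ for all $x\in H_j^{\neq}(k)$; we write $H_j\stackrel{c}{\Longrightarrow}H_k$ if $H_j\stackrel{c}{\longrightarrow}H_k$ and there is no outcome $d$ with $H_k\stackrel{d}{\longrightarrow}H_j$. *)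

theory Defs
  imports "HOL-Library.FuncSet"
begin

(* Players are 0..<n. Strategy sets X i. A strategy profile is an element of
   PiE {0..<n} X.  X_{-i} is PiE ({0..<n} - {i}) X, and (s,y) is y(i := s). *)

definition profiles :: "nat \<Rightarrow> (nat \<Rightarrow> 'a set) \<Rightarrow> (nat \<Rightarrow> 'a) set" where
  "profiles n X = PiE {0..<n} X"

definition others :: "nat \<Rightarrow> (nat \<Rightarrow> 'a set) \<Rightarrow> nat \<Rightarrow> (nat \<Rightarrow> 'a) set" where
  "others n X i = PiE ({0..<n} - {i}) X"

definition join :: "nat \<Rightarrow> 'a \<Rightarrow> (nat \<Rightarrow> 'a) \<Rightarrow> (nat \<Rightarrow> 'a)" where
  "join i s y = y(i := s)"

definition game_form ::
  "nat \<Rightarrow> (nat \<Rightarrow> 'a set) \<Rightarrow> 'b set \<Rightarrow> ((nat \<Rightarrow> 'a) \<Rightarrow> 'b) \<Rightarrow> bool" where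
  "game_form n X A g \<longleftrightarrow>
     (\<forall>i<n. finite (X i) \<and> X i \<noteq> {}) \<and> finite A \<and> A \<noteq> {} \<and>
     (\<forall>x\<in>profiles n X. g x \<in> A)"

definition WTT :: "nat \<Rightarrow> (nat \<Rightarrow> 'a set) \<Rightarrow> ((nat \<Rightarrow> 'a) \<Rightarrow> 'b) \<Rightarrow> bool" where
  "WTT n X g \<longleftrightarrow>
     (\<forall>i<n. \<forall>s\<in>X i. \<forall>s'\<in>X i. \<forall>y\<in>others n X i. \<forall>y'\<in>others n X i.
        s \<noteq> s' \<longrightarrow> y \<noteq> y' \<longrightarrow>
        g (join i s y) = g (join i s y') \<or> g (join i s y) = g (join i s' y) \<or>
        g (join i s' y') = g (join i s' y) \<or> g (join i s' y') = g (join i s y'))"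

definition Hneq ::
  "nat \<Rightarrow> (nat \<Rightarrow> 'a set) \<Rightarrow> ((nat \<Rightarrow> 'a) \<Rightarrow> 'b) \<Rightarrow> nat \<Rightarrow> 'a \<Rightarrow> 'a \<Rightarrow> (nat \<Rightarrow> 'a) set" where
  "Hneq n X g i j k = {join i j y | y. y \<in> others n X i \<and> g (join i j y) \<noteq> g (join i k y)}"

definition arrow ::
  "nat \<Rightarrow> (nat \<Rightarrow> 'a set) \<Rightarrow> ((nat \<Rightarrow> 'a) \<Rightarrow> 'b) \<Rightarrow> nat \<Rightarrow> 'a \<Rightarrow> 'b \<Rightarrow> 'a \<Rightarrow> bool" where
  "arrow n X g i j c k \<longleftrightarrow> (\<forall>x\<in>Hneq n X g i j k. g x = c)"

definition strong_arrow ::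
  "nat \<Rightarrow> (nat \<Rightarrow> 'a set) \<Rightarrow> 'b set \<Rightarrow> ((nat \<Rightarrow> 'a) \<Rightarrow> 'b) \<Rightarrow> nat \<Rightarrow> 'a \<Rightarrow> 'b \<Rightarrow> 'a \<Rightarrow> bool" where
  "strong_arrow n X A g i j c k \<longleftrightarrow>
     arrow n X g i j c k \<and> \<not> (\<exists>d\<in>A. arrow n X g i k d j)"

end

theory Submission
  imports Defs
begin

theorem mainTheorem4:
  fixes n :: nat and X :: "nat \<Rightarrow> 'a set" and A :: "'b set"
    and g :: "(nat \<Rightarrow> 'a) \<Rightarrow> 'b" and i :: nat and l j k :: 'a and c d :: 'b
  assumes "game_form n X A g"
    and "WTT n X g"
    and "i < n"
    and "l \<in> X i" and "j \<in> X i" and "k \<in> X i"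
    and "l \<noteq> j" and "l \<noteq> k" and "j \<noteq> k"
    and "c \<in> A" and "d \<in> A"
    and "strong_arrow n X A g i l c j"
    and "strong_arrow n X A g i l d k"
  shows "c = d"
proof (rule ccontr)
  assume cd: "c \<noteq> d"
  have a1: "\<And>y. y \<in> others n X i \<Longrightarrow> g (join i l y) \<noteq> g (join i j y) \<Longrightarrow> g (join i l y) = c"
    using assms(12) unfolding strong_arrow_def arrow_def Hneq_def by blast
  have a2: "\<And>y. y \<in> others n X i \<Longrightarrow> g (join i l y) \<noteq> g (join i k y) \<Longrightarrow> g (join i l y) = d"
    using assms(13) unfolding strong_arrow_def arrow_def Hneq_def by blast
  have "\<not> arrow n X g i j d l" using assms(12,11) unfolding strong_arrow_def by blast
  then obtain y1 where y1: "y1 \<in> others n X i" "g (join i j y1) \<noteq> g (join i l y1)" "g (join i j y1) \<noteq> d"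
    unfolding arrow_def Hneq_def by blast
  have "\<not> arrow n X g i k c l" using assms(13,10) unfolding strong_arrow_def by blast
  then obtain y2 where y2: "y2 \<in> others n X i" "g (join i k y2) \<noteq> g (join i l y2)" "g (join i k y2) \<noteq> c"
    unfolding arrow_def Hneq_def by blast
  have e1: "g (join i l y1) = c" using a1 y1 by metis
  have e1': "g (join i k y1) = c" using a2 y1 e1 cd by metis
  have e2: "g (join i l y2) = d" using a2 y2 by metis
  have e2': "g (join i j y2) = d" using a1 y2 e2 cd by metis
  have "y1 \<noteq> y2" using e1 e2 cd by auto
  then show False
    using assms(2,3,5,6,9) y1 y2 e1 e1' e2 e2' unfolding WTT_def
    by metis
qed

end
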